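(* Let $p$ be a prime and let $e\geq 2$ and $d\geq 3$ be integers. Let $\mathcal P(p^e,d)\subset\mathbb R^d$ be the convex hull of all $d$-dimensional vector-factorisations of $p^e$. Then the set of all facets of $\mathcal P(p^e,d)$ is exactly the set of convex hulls of the following finite sets: (1) $\{(p^e,1,\dots,1),(1,p^e,1,\dots,1),\dots,(1,\dots,1,p^e)\}$; (2) for each $i=1,\dots,d$, the set $\{(p^{\beta_1},\dots,p^{\beta_d})\ :\ (\beta_1,\dots,\beta_d)\in\mathbb N^d,\ \beta_i=0,\ \sum_{j=1}^d\beta_j=e\}$; (3) for each $\lambda\in\{1,\dots,\min(e,d-1)\}$ and each $d$-dimensional vector-factorisation $(p^{\beta_1},\dots,p^{\beta_d})$ of $p^{e-\lambda}$, the set $\{(p^{\beta_1+\epsilon_1},\dots,p^{\beta_d+\epsilon_d})\ :\ (\epsilon_1,\dots,\epsilon_d)\in\{0,1\}^d,\ \sum_{i=1}^d\epsilon_i=\lambda\}$.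
   Context: $\mathbb N=\{0,1,2,\dots\}$. A $d$-dimensional vector-factorisation of an integer $N\geq1$ is an integral vector $(v_1,\dots,v_d)\in\mathbb N^d$ with $v_1v_2\cdots v_d=N$. A facet of a $d$-dimensional polytope is a face of dimension $d-1$. *)

theory Defs
  imports "HOL-Analysis.Analysis"
begin

text \<open>The d-dimensional vector-factorisations of N, as points of real^'n
  (d = CARD('n)): vectors with entries in the naturals whose product is N.\<close>
definition vec_factorisations :: "nat \<Rightarrow> (real^'n) set" where
  "vec_factorisations N = {v. (\<forall>i. v $ i \<in> \<nat>) \<and> (\<Prod>i\<in>UNIV. v $ i) = real N}"

definition factorisation_polytope :: "nat \<Rightarrow> (real^'n) set" where
  "factorisation_polytope N = convex hull (vec_factorisations N)"

end

theory Submission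
  imports Defs "HOL-Computational_Algebra.Primes"
begin

definition E :: "nat \<Rightarrow> ('n::finite \<Rightarrow> nat) \<Rightarrow> real^'n" where
  "E p g = (\<chi> j. real p ^ g j)"
definition Cs :: "nat \<Rightarrow> ('n::finite \<Rightarrow> nat) set" where
  "Cs e = {g. sum g UNIV = e}"

lemma finite_Cs: "finite (Cs e :: ('n::finite \<Rightarrow> nat) set)"
proof -
  have "Cs e \<subseteq> Pi\<^sub>E UNIV (\<lambda>_. {..e})"
    unfolding Cs_def PiE_UNIV_domain
    by (auto simp: Pi_def intro: member_le_sum[of _ UNIV, simplified])
  moreover have "finite (Pi\<^sub>E (UNIV::'n set) (\<lambda>_. {..e}))"
    by (rule finite_PiE) auto
  ultimately show ?thesis by (rule finite_subset)
qed

lemma E_inj: assumes "p \<ge> 2" shows "E p g = E p h \<longleftrightarrow> g = h"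
proof
  assume "E p g = E p h"
  then have "\<And>j. real p ^ g j = real p ^ h j" by (simp add: E_def vec_eq_iff)
  then have "\<And>j. g j = h j" using assms by (simp add: power_inject_exp)
  then show "g = h" by auto
qed simp

lemma vf_char:
  assumes "prime p"
  shows "vec_factorisations (p ^ k) = (E p ` Cs k :: (real^'n::finite) set)"
proof
  have p1: "p > 1" using assms prime_gt_1_nat by blast
  show "vec_factorisations (p ^ k) \<subseteq> (E p ` Cs k :: (real^'n) set)"
  proof
    fix v :: "real^'n" assume "v \<in> vec_factorisations (p ^ k)"
    then have nat: "\<And>i. v $ i \<in> \<nat>" and pr: "(\<Prod>i\<in>UNIV. v $ i) = real (p ^ k)"
      by (auto simp: vec_factorisations_def)
    have "\<forall>i. \<exists>m. v $ i = real m" using nat by (metis Nats_cases)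
    then obtain n where vn: "\<And>i. v $ i = real (n i)" by metis
    have "real (\<Prod>i\<in>UNIV. n i) = real (p ^ k)" using pr by (simp add: vn)
    then have pn: "(\<Prod>i\<in>UNIV. n i) = p ^ k" by (simp only: of_nat_eq_iff)
    have "\<exists>g. n i = p ^ g" for i
    proof -
      have "n i dvd p ^ k" using pn dvd_prodI[of UNIV i n] by simp
      then show ?thesis using divides_primepow_nat[OF assms] by auto
    qed
    then obtain g where g: "\<And>i. n i = p ^ g i" by metis
    have "p ^ (sum g UNIV) = p ^ k" using pn by (simp add: g power_sum)
    then have "sum g UNIV = k" using p1 by (simp add: power_inject_exp)
    moreover have "v = E p g" by (simp add: vec_eq_iff E_def vn g)
    ultimately show "v \<in> E p ` Cs k" by (auto simp: Cs_def)
  qed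
  show "(E p ` Cs k :: (real^'n) set) \<subseteq> vec_factorisations (p ^ k)"
    by (auto simp: vec_factorisations_def E_def Cs_def power_sum simp flip: of_nat_power)
qed



definition fval :: "nat \<Rightarrow> real^'n \<Rightarrow> ('n::finite \<Rightarrow> nat) \<Rightarrow> real" where
  "fval p a g = (\<Sum>k\<in>UNIV. a$k * real p ^ g k)"

lemma inner_E: "a \<bullet> E p g = fval p a g"
  by (simp add: inner_vec_def E_def fval_def)

definition Mx :: "nat \<Rightarrow> nat \<Rightarrow> real^'n \<Rightarrow> ('n::finite \<Rightarrow> nat) set" where
  "Mx p e a = {g \<in> Cs e. \<forall>h\<in>Cs e. fval p a h \<le> fval p a g}"

definition L0 :: "nat \<Rightarrow> ('n::finite \<Rightarrow> nat) set" where
  "L0 e = {g. \<exists>i. g = (\<lambda>j. if j = i then e else 0)}"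
definition Li :: "nat \<Rightarrow> 'n \<Rightarrow> ('n::finite \<Rightarrow> nat) set" where
  "Li e i = {g. sum g UNIV = e \<and> g i = 0}"
definition Lb :: "nat \<Rightarrow> ('n::finite \<Rightarrow> nat) \<Rightarrow> ('n \<Rightarrow> nat) set" where
  "Lb l \<beta> = {g. \<exists>\<epsilon>. (\<forall>j. \<epsilon> j \<in> {0,1}) \<and> sum \<epsilon> UNIV = l \<and> g = (\<lambda>j. \<beta> j + \<epsilon> j)}"
definition listed :: "nat \<Rightarrow> ('n::finite \<Rightarrow> nat) set \<Rightarrow> bool" where
  "listed e L \<longleftrightarrow> L = L0 e \<or> (\<exists>i. L = Li e i) \<or>
     (\<exists>l \<beta>. l \<in> {1..min e (CARD('n) - 1)} \<and> sum \<beta> UNIV = e - l \<and> L = Lb l \<beta>)"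



lemma sum_upd2_nat:
  fixes g :: "'n::finite \<Rightarrow> nat"
  assumes "i \<noteq> j"
  shows "sum (g(i := x, j := y)) UNIV + g i + g j = sum g UNIV + x + y"
proof -
  have A: "sum h UNIV = h i + (h j + sum h (UNIV - {i} - {j}))" for h :: "'n \<Rightarrow> nat"
  proof -
    have "sum h UNIV = h i + sum h (UNIV - {i})" by (rule sum.remove) auto
    also have "sum h (UNIV - {i}) = h j + sum h (UNIV - {i} - {j})"
      using assms by (intro sum.remove) auto
    finally show ?thesis .
  qed
  have "sum (g(i := x, j := y)) (UNIV - {i} - {j}) = sum g (UNIV - {i} - {j})"
    by (intro sum.cong) auto
  then show ?thesis using A[of "g(i := x, j := y)"] A[of g] assms by simp
qed

lemma fval_upd2:
  fixes g :: "'n::finite \<Rightarrow> nat"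
  assumes "i \<noteq> j"
  shows "fval p a (g(i := x, j := y)) = fval p a g - a$i * real p ^ g i - a$j * real p ^ g j
           + a$i * real p ^ x + a$j * real p ^ y"
proof -
  have A: "sum h UNIV = h i + (h j + sum h (UNIV - {i} - {j}))" for h :: "'n \<Rightarrow> real"
  proof -
    have "sum h UNIV = h i + sum h (UNIV - {i})" by (rule sum.remove) auto
    also have "sum h (UNIV - {i}) = h j + sum h (UNIV - {i} - {j})"
      using assms by (intro sum.remove) auto
    finally show ?thesis .
  qed
  have "(\<Sum>k\<in>UNIV - {i} - {j}. a$k * real p ^ (g(i := x, j := y)) k) = (\<Sum>k\<in>UNIV - {i} - {j}. a$k * real p ^ g k)"
    by (intro sum.cong) auto
  then show ?thesis unfolding fval_def
    using A[of "\<lambda>k. a$k * real p ^ (g(i := x, j := y)) k"] A[of "\<lambda>k. a$k * real p ^ g k"] assms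
    by simp
qed

lemma upd2_Cs:
  fixes g :: "'n::finite \<Rightarrow> nat"
  assumes "i \<noteq> j" "g \<in> Cs e" "x + y = g i + g j"
  shows "g(i := x, j := y) \<in> Cs e"
  using sum_upd2_nat[OF assms(1), of g x y] assms(2,3) by (simp add: Cs_def)

lemma Mx_max:
  assumes "g \<in> Mx p e a" "h \<in> Cs e" shows "fval p a h \<le> fval p a g"
  using assms by (auto simp: Mx_def)

definition delta :: "nat \<Rightarrow> 'n \<Rightarrow> ('n::finite \<Rightarrow> nat)" where
  "delta e k = (\<lambda>j. if j = k then e else 0)"

lemma delta_Cs: "delta e k \<in> Cs e"
  by (simp add: delta_def Cs_def)

lemma sum_ind: "(\<Sum>j\<in>(UNIV::'n::finite set). if j \<in> A then (1::nat) else 0) = card A"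
  by (simp add: sum.If_cases)

lemma pos_case:
  fixes a :: "real^'n::finite"
  assumes p2: "p \<ge> 2" and e1: "e \<ge> 1" and j0: "a$j0 > 0" and g: "g \<in> Mx p e a"
  shows "g \<in> L0 e"
proof -
  have gC: "g \<in> Cs e" using g by (simp add: Mx_def)
  have pp: "real p \<ge> 2" using p2 by simp
  have A: "a$i > 0" if "g i \<ge> 1" for i
  proof (rule ccontr)
    assume "\<not> a$i > 0"
    then have ai: "a$i \<le> 0" by simp
    then have ij: "i \<noteq> j0" using j0 by auto
    let ?h = "g(i := 0, j0 := g j0 + g i)"
    have hC: "?h \<in> Cs e" using upd2_Cs[OF ij gC] by simp
    have "fval p a ?h \<le> fval p a g" using Mx_max[OF g hC] .
    then have le: "a$i * 1 + a$j0 * real p ^ (g j0 + g i) \<le> a$i * real p ^ g i + a$j0 * real p ^ g j0"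
      using fval_upd2[OF ij, of p a g 0 "g j0 + g i"] by simp
    have "real p ^ g i > 1" using that pp by (simp add: one_less_power)
    then have 1: "a$i * real p ^ g i \<le> a$i * 1" using ai mult_left_mono_neg[of 1 "real p ^ g i" "a$i"] by linarith
    have "real p ^ g j0 * 1 < real p ^ g j0 * real p ^ g i"
      using \<open>real p ^ g i > 1\<close> pp by (intro mult_strict_left_mono) simp_all
    then have "real p ^ g j0 < real p ^ (g j0 + g i)" by (simp add: power_add)
    then have 2: "a$j0 * real p ^ g j0 < a$j0 * real p ^ (g j0 + g i)" using j0 by simp
    show False using le 1 2 by linarith
  qed
  have B: False if "i \<noteq> k" "g i \<ge> 1" "g k \<ge> 1" for i k
  proof -
    have ai: "a$i > 0" and ak: "a$k > 0" using A that by auto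
    let ?h1 = "g(i := 0, k := g k + g i)"
    let ?h2 = "g(k := 0, i := g i + g k)"
    have h1C: "?h1 \<in> Cs e" using upd2_Cs[OF that(1) gC] by simp
    have h2C: "?h2 \<in> Cs e" using upd2_Cs[OF that(1)[symmetric] gC] by simp
    have le1: "a$i * 1 + a$k * real p ^ (g k + g i) \<le> a$i * real p ^ g i + a$k * real p ^ g k"
      using Mx_max[OF g h1C] fval_upd2[OF that(1), of p a g 0 "g k + g i"] by simp
    have le2: "a$k * 1 + a$i * real p ^ (g i + g k) \<le> a$k * real p ^ g k + a$i * real p ^ g i"
      using Mx_max[OF g h2C] fval_upd2[OF that(1)[symmetric], of p a g 0 "g i + g k"] by simp
    define X where "X = real p ^ g i" define Y where "Y = real p ^ g k"
    have X: "X > 1" and Y: "Y > 1" using that pp by (auto simp: X_def Y_def one_less_power)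
    have le1': "(X - 1) * (a$k * Y - a$i) \<le> 0" using le1 unfolding X_def Y_def power_add
      by (simp add: algebra_simps)
    have le2': "(Y - 1) * (a$i * X - a$k) \<le> 0" using le2 unfolding X_def Y_def power_add
      by (simp add: algebra_simps)
    have c1: "a$k * Y \<le> a$i" using le1' X by (simp add: mult_le_0_iff)
    have c2: "a$i * X \<le> a$k" using le2' Y by (simp add: mult_le_0_iff)
    have "a$k * Y * X \<le> a$i * X" using c1 X by (simp add: mult_right_mono)
    also have "\<dots> \<le> a$k" using c2 .
    finally have "a$k * (Y * X) \<le> a$k * 1" by (simp add: mult.assoc)
    then have "Y * X \<le> 1" using ak by simp
    moreover have "Y * X > 1" using X Y by (metis less_1_mult)
    ultimately show False by simp
  qed
  have "sum g UNIV = e" using gC by (simp add: Cs_def)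
  then obtain i where i: "g i \<ge> 1" using e1
    by (metis (full_types) One_nat_def Suc_leI neq0_conv not_one_le_zero sum.neutral)
  have other: "g k = 0" if "k \<noteq> i" for k using B[of i k] i that by force
  have "sum g UNIV = g i" using other by (subst sum.remove[of UNIV i]) auto
  then have "g i = e" using \<open>sum g UNIV = e\<close> by simp
  then have "g = (\<lambda>j. if j = i then e else 0)" using other by auto
  then show ?thesis unfolding L0_def by blast
qed


lemma zero_case:
  fixes a :: "real^'n::finite"
  assumes p2: "p \<ge> 2" and nonpos: "\<And>j. a$j \<le> 0" and i0: "a$i0 = 0" and k: "a$k < 0"
    and g: "g \<in> Mx p e a"
  shows "g \<in> Li e k"
proof -
  have gC: "g \<in> Cs e" using g by (simp add: Mx_def)
  have pp: "real p \<ge> 2" using p2 by simp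
  have "fval p a (delta e i0) \<le> fval p a g" using Mx_max[OF g delta_Cs] .
  moreover have "fval p a (delta e i0) = (\<Sum>j\<in>UNIV. a$j)"
    unfolding fval_def delta_def by (intro sum.cong) (auto simp: i0)
  ultimately have ge: "(\<Sum>j\<in>UNIV. a$j) \<le> (\<Sum>j\<in>UNIV. a$j * real p ^ g j)" by (simp add: fval_def)
  have le: "a$j * real p ^ g j \<le> a$j" for j
  proof -
    have "1 \<le> real p ^ g j" using pp by (simp add: one_le_power)
    then show ?thesis using nonpos[of j] mult_left_mono_neg[of 1 "real p ^ g j" "a$j"] by simp
  qed
  have "g k = 0"
  proof (rule ccontr)
    assume "g k \<noteq> 0"
    then have "1 < real p ^ g k" using pp by (simp add: one_less_power)
    then have "a$k * real p ^ g k < a$k * 1" using k by (simp only: mult_less_cancel_left_neg)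
    then have "(\<Sum>j\<in>UNIV. a$j * real p ^ g j) < (\<Sum>j\<in>UNIV. a$j)"
      using le by (intro sum_strict_mono_ex1) auto
    then show False using ge by simp
  qed
  then show ?thesis using gC by (simp add: Li_def Cs_def)
qed

lemma neg_case:
  fixes a :: "real^'n::finite"
  assumes p2: "p \<ge> 2" and neg: "\<And>j. a$j < 0"
    and g: "g \<in> Mx p e a" and h: "h \<in> Mx p e a"
  shows "g i \<le> h i + 1"
proof (rule ccontr)
  assume "\<not> g i \<le> h i + 1"
  then have gi: "g i \<ge> h i + 2" by simp
  have gC: "g \<in> Cs e" and hC: "h \<in> Cs e" using g h by (auto simp: Mx_def)
  have pp: "real p \<ge> 2" using p2 by simp
  have "\<exists>j. g j < h j"
  proof (rule ccontr)
    assume "\<not> (\<exists>j. g j < h j)"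
    then have "\<And>j. h j \<le> g j" by (simp add: not_less)
    moreover have "h i < g i" using gi by simp
    ultimately have "sum h UNIV < sum g UNIV" by (intro sum_strict_mono_ex1) auto
    then show False using gC hC by (simp add: Cs_def)
  qed
  then obtain j where j: "g j < h j" by blast
  have ij: "i \<noteq> j" using gi j by auto
  obtain u where u: "g i = Suc u" using gi by (cases "g i") auto
  obtain w where w: "h j = Suc w" using j by (cases "h j") auto
  have uh: "u \<ge> h i + 1" using gi u by simp
  have wg: "w \<ge> g j" using j w by simp
  let ?g1 = "g(i := u, j := g j + 1)"
  let ?h1 = "h(i := h i + 1, j := w)"
  have g1C: "?g1 \<in> Cs e" using upd2_Cs[OF ij gC] u by simp
  have h1C: "?h1 \<in> Cs e" using upd2_Cs[OF ij hC] w by simp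
  have le1: "a$i * real p ^ u + a$j * real p ^ (g j + 1) \<le> a$i * real p ^ g i + a$j * real p ^ g j"
    using Mx_max[OF g g1C] fval_upd2[OF ij, of p a g u "g j + 1"] by simp
  have le2: "a$i * real p ^ (h i + 1) + a$j * real p ^ w \<le> a$i * real p ^ h i + a$j * real p ^ h j"
    using Mx_max[OF h h1C] fval_upd2[OF ij, of p a h "h i + 1" w] by simp
  define ci where "ci = - a$i" define cj where "cj = - a$j"
  have ci: "ci > 0" and cj: "cj > 0" using neg by (auto simp: ci_def cj_def)
  define P where "P = real p"
  have P1: "P - 1 > 0" using pp by (simp add: P_def)
  have "(P - 1) * (ci * P ^ u) \<le> (P - 1) * (cj * P ^ g j)"
    using le1 unfolding u ci_def cj_def P_def by (simp add: algebra_simps)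
  then have c1: "ci * P ^ u \<le> cj * P ^ g j" using P1 by simp
  have "(P - 1) * (cj * P ^ w) \<le> (P - 1) * (ci * P ^ h i)"
    using le2 unfolding w ci_def cj_def P_def by (simp add: algebra_simps)
  then have c2: "cj * P ^ w \<le> ci * P ^ h i" using P1 by simp
  have "P ^ g j \<le> P ^ w" using wg pp by (simp add: P_def power_increasing)
  then have "cj * P ^ g j \<le> cj * P ^ w" using cj by simp
  then have "ci * P ^ u \<le> ci * P ^ h i" using c1 c2 by linarith
  then have "P ^ u \<le> P ^ h i" using ci by simp
  moreover have "P ^ h i < P ^ u" using uh pp unfolding P_def
    by (intro power_strict_increasing) auto
  ultimately show False by simp
qed

lemma single:
  fixes g :: "'n::finite \<Rightarrow> nat"
  assumes e2: "e \<ge> 2" and d3: "CARD('n) \<ge> 3" and gC: "g \<in> Cs e"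
  shows "\<exists>L. listed e L \<and> g \<in> L"
proof (cases "\<exists>i. g i = 0")
  case True
  then obtain i where "g i = 0" by blast
  then have "g \<in> Li e i" using gC by (simp add: Li_def Cs_def)
  then show ?thesis unfolding listed_def by blast
next
  case False
  obtain k :: 'n where True by blast
  have gk: "g k \<ge> 1" using False by (simp add: Suc_le_eq)
  define b where "b = g(k := g k - 1)"
  define eps where "eps = (\<lambda>j. if j = k then 1 else (0::nat))"
  have 1: "sum b UNIV = b k + sum b (UNIV - {k})" by (rule sum.remove) auto
  have 2: "sum g UNIV = g k + sum g (UNIV - {k})" by (rule sum.remove) auto
  have 3: "sum b (UNIV - {k}) = sum g (UNIV - {k})" by (intro sum.cong) (auto simp: b_def)
  have "sum b UNIV + 1 = sum g UNIV" using 1 2 3 gk by (simp add: b_def)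
  then have sb: "sum b UNIV = e - 1" using gC gk by (simp add: Cs_def)
  have "sum eps UNIV = 1" by (simp add: eps_def)
  moreover have "g = (\<lambda>j. b j + eps j)" using gk by (auto simp: b_def eps_def)
  moreover have "\<forall>j. eps j \<in> {0,1}" by (simp add: eps_def)
  ultimately have "g \<in> Lb 1 b" unfolding Lb_def by blast
  moreover have "(1::nat) \<in> {1..min e (CARD('n) - 1)}" using e2 d3 by (simp add: atLeastAtMost_iff)
  moreover have "listed e (Lb 1 b)" unfolding listed_def
    using sb \<open>(1::nat) \<in> {1..min e (CARD('n) - 1)}\<close> by blast
  ultimately show ?thesis by blast
qed


lemma cover:
  fixes M :: "('n::finite \<Rightarrow> nat) set"
  assumes e2: "e \<ge> 2" and d3: "CARD('n) \<ge> 3" and MC: "M \<subseteq> Cs e" and Mne: "M \<noteq> {}"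
    and pw: "\<And>g h i. g \<in> M \<Longrightarrow> h \<in> M \<Longrightarrow> g i \<le> h i + 1"
  shows "\<exists>L. listed e L \<and> M \<subseteq> L"
proof -
  have finM: "finite M" using finite_Cs MC finite_subset by blast
  define b where "b i = Min ((\<lambda>g. g i) ` M)" for i
  have bl: "b i \<le> g i" if "g \<in> M" for g i
    unfolding b_def using finM that by (intro Min_le) auto
  have bu: "g i \<le> b i + 1" if "g \<in> M" for g i
  proof -
    have "b i \<in> (\<lambda>g. g i) ` M" unfolding b_def using finM Mne by (intro Min_in) auto
    then obtain h where "h \<in> M" "b i = h i" by auto
    then show ?thesis using pw[OF that, of h i] by simp
  qed
  obtain g0 where g0: "g0 \<in> M" using Mne by blast
  have sg: "sum g UNIV = e" if "g \<in> M" for g using that MC by (auto simp: Cs_def)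
  have sbe: "sum b UNIV \<le> e" using sum_mono[of UNIV b g0] bl[OF g0] sg[OF g0] by simp
  define l where "l = e - sum b UNIV"
  define eps where "eps g = (\<lambda>j. g j - b j)" for g :: "'n \<Rightarrow> nat"
  have eps01: "eps g j \<in> {0,1}" if "g \<in> M" for g j
    using bl[OF that, of j] bu[OF that, of j] by (auto simp: eps_def)
  have geq: "g = (\<lambda>j. b j + eps g j)" if "g \<in> M" for g
    using bl[OF that] by (auto simp: eps_def)
  have seps: "sum (eps g) UNIV = l" if "g \<in> M" for g
  proof -
    have "sum (eps g) UNIV = sum g UNIV - sum b UNIV"
      unfolding eps_def using bl[OF that] by (intro sum_subtractf_nat) auto
    then show ?thesis using sg[OF that] by (simp add: l_def)
  qed
  show ?thesis
  proof (cases "1 \<le> l \<and> l \<le> CARD('n) - 1")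
    case True
    have "M \<subseteq> Lb l b"
    proof
      fix g assume g: "g \<in> M"
      have "\<forall>j. eps g j \<in> {0,1}" using eps01[OF g] by blast
      then show "g \<in> Lb l b" unfolding Lb_def using seps[OF g] geq[OF g] by blast
    qed
    moreover have "l \<in> {1..min e (CARD('n) - 1)}" using True by (simp add: l_def)
    moreover have "sum b UNIV = e - l" using sbe by (simp add: l_def)
    ultimately have "listed e (Lb l b) \<and> M \<subseteq> Lb l b" unfolding listed_def by blast
    then show ?thesis by blast
  next
    case False
    have allg0: "g = g0" if "g \<in> M" for g
    proof (cases "l = 0")
      case True
      have z: "eps h j = 0" if "h \<in> M" for h j
      proof -
        have "eps h j \<le> sum (eps h) UNIV" by (rule member_le_sum) auto
        then show ?thesis using seps[OF that] True by simp
      qed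
      show ?thesis using geq[OF that] geq[OF g0] z[OF that] z[OF g0] by (simp add: fun_eq_iff)
    next
      case False2: False
      then have ld: "l \<ge> CARD('n)" using False by auto
      have o: "eps h j = 1" if "h \<in> M" for h j
      proof (rule ccontr)
        assume "eps h j \<noteq> 1"
        then have lt: "eps h j < 1" using eps01[OF that, of j] by auto
        have le: "\<forall>i\<in>UNIV. eps h i \<le> 1"
        proof
          fix i :: 'n show "eps h i \<le> 1" using eps01[OF that, of i] by auto
        qed
        have fin: "finite (UNIV::'n set)" by simp
        have ex: "\<exists>i\<in>UNIV. eps h i < 1" using lt by blast
        have "sum (eps h) UNIV < sum (\<lambda>_::'n. 1::nat) UNIV"
          by (rule sum_strict_mono_ex1[OF fin le ex])
        then show False using seps[OF that] ld by simp
      qed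
      show ?thesis using geq[OF that] geq[OF g0] o[OF that] o[OF g0] by (simp add: fun_eq_iff)
    qed
    obtain L where L: "listed e L" "g0 \<in> L" using single[OF e2 d3] g0 MC by blast
    have "M \<subseteq> L" using allg0 L(2) by blast
    then show ?thesis using L(1) by blast
  qed
qed

lemma classify2:
  assumes p2: "p \<ge> 2" and e2: "e \<ge> 2" and d3: "CARD('n::finite) \<ge> 3" and a0: "a \<noteq> 0"
    and Mne: "Mx p e (a::real^'n) \<noteq> {}"
  shows "\<exists>L. listed e L \<and> Mx p e a \<subseteq> L"
proof (cases "\<exists>j. a$j > 0")
  case True
  then obtain j where j: "a$j > 0" by blast
  have "Mx p e a \<subseteq> L0 e" using pos_case[OF p2 _ j] e2 by auto
  moreover have "listed e (L0 e)" by (simp add: listed_def)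
  ultimately show ?thesis by blast
next
  case False
  then have nonpos: "\<And>j. a$j \<le> 0" by (simp add: not_less)
  show ?thesis
  proof (cases "\<exists>i0. a$i0 = 0")
    case True
    then obtain i0 where i0: "a$i0 = 0" by blast
    obtain k where "a$k \<noteq> 0" using a0 by (metis vec_eq_iff zero_index)
    then have k: "a$k < 0" using nonpos[of k] by simp
    have "Mx p e a \<subseteq> Li e k" using zero_case[OF p2 nonpos i0 k] by blast
    moreover have "listed e (Li e k)" unfolding listed_def by blast
    ultimately show ?thesis by blast
  next
    case False
    then have neg: "\<And>j. a$j < 0" using nonpos by (metis order.not_eq_order_implies_strict)
    show ?thesis
    proof (rule cover[OF e2 d3 _ Mne])
      show "Mx p e a \<subseteq> Cs e" by (auto simp: Mx_def)
      show "\<And>g h i. g \<in> Mx p e a \<Longrightarrow> h \<in> Mx p e a \<Longrightarrow> g i \<le> h i + 1"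
        using neg_case[OF p2 neg] by blast
    qed
  qed
qed


lemma two_others:
  fixes i :: "'n::finite"
  assumes d3: "CARD('n) \<ge> 3"
  obtains j k :: 'n where "j \<noteq> i" "k \<noteq> i" "j \<noteq> k"
proof -
  have "card (UNIV - {i}) = CARD('n) - 1" by (simp add: card_Diff_singleton)
  then have "2 \<le> card (UNIV - {i})" using d3 by simp
  then obtain T where T: "T \<subseteq> UNIV - {i}" "card T = 2" by (meson obtain_subset_with_card_n)
  then obtain j k where "T = {j, k}" "j \<noteq> k" by (auto simp: card_2_iff)
  then show ?thesis using that T by auto
qed

lemma lb_eps1:
  assumes "1 \<le> l" "l \<le> CARD('n::finite) - 1"
  shows "\<exists>\<epsilon>. (\<forall>j. \<epsilon> j \<in> {0,1}) \<and> sum \<epsilon> UNIV = l \<and> \<epsilon> (i::'n) = (1::nat)"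
proof -
  have "card (UNIV - {i}) = CARD('n) - 1" by (simp add: card_Diff_singleton)
  then have "l - 1 \<le> card (UNIV - {i})" using assms by simp
  then obtain T where T: "T \<subseteq> UNIV - {i}" "card T = l - 1" "finite T"
    by (meson obtain_subset_with_card_n)
  define eps where "eps j = (if j \<in> insert i T then 1 else (0::nat))" for j
  have "sum eps UNIV = card (insert i T)" unfolding eps_def by (rule sum_ind)
  also have "\<dots> = l" using T assms by (subst card_insert_disjoint) auto
  finally show ?thesis by (intro exI[of _ eps]) (auto simp: eps_def)
qed

lemma lb_eps0:
  assumes "1 \<le> l" "l \<le> CARD('n::finite) - 1"
  shows "\<exists>\<epsilon>. (\<forall>j. \<epsilon> j \<in> {0,1}) \<and> sum \<epsilon> UNIV = l \<and> \<epsilon> (i::'n) = (0::nat)"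
proof -
  have "card (UNIV - {i}) = CARD('n) - 1" by (simp add: card_Diff_singleton)
  then have "l \<le> card (UNIV - {i})" using assms by simp
  then obtain T where T: "T \<subseteq> UNIV - {i}" "card T = l" "finite T"
    by (meson obtain_subset_with_card_n)
  define eps where "eps j = (if j \<in> T then 1 else (0::nat))" for j
  have "sum eps UNIV = card T" unfolding eps_def by (rule sum_ind)
  then show ?thesis using T by (intro exI[of _ eps]) (auto simp: eps_def)
qed

lemma Lb_pw:
  assumes "g \<in> Lb l b" "h \<in> Lb l b" shows "g i \<le> h i + 1"
proof -
  obtain e1 where e1: "\<forall>j. e1 j \<in> {0,1}" "g = (\<lambda>j. b j + e1 j)" using assms(1) unfolding Lb_def by blast
  obtain e2 where e2: "\<forall>j. e2 j \<in> {0,1}" "h = (\<lambda>j. b j + e2 j)" using assms(2) unfolding Lb_def by blast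
  have "e1 i \<in> {0,1}" using e1(1) by blast
  then have "e1 i \<le> 1" by auto
  then show ?thesis using e1(2) e2(2) by simp
qed

lemma Lb_Cs:
  assumes "sum b UNIV = e - l" "l \<le> e" shows "Lb l b \<subseteq> Cs e"
proof
  fix g assume "g \<in> Lb l b"
  then obtain eps where "sum eps UNIV = l" "g = (\<lambda>j. b j + eps j)" unfolding Lb_def by blast
  then show "g \<in> Cs e" using assms by (simp add: Cs_def sum.distrib)
qed

lemma delta_pw:
  assumes "e \<ge> 2" "j \<noteq> k" "delta e j \<in> M" "delta e k \<in> M"
    and pw: "\<And>g h. g \<in> M \<Longrightarrow> h \<in> M \<Longrightarrow> g j \<le> h j + 1"
  shows False
  using pw[OF assms(3,4)] assms(1,2) by (simp add: delta_def)

lemma delta_L0: "delta e k \<in> L0 e"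
  unfolding L0_def delta_def by blast

lemma mixed:
  assumes e2: "e \<ge> 2" and jk: "j \<noteq> k"
  defines "m \<equiv> (\<lambda>x. if x = j then e - 1 else if x = k then 1 else (0::nat))"
  shows "m \<in> Cs e" "m \<notin> L0 e"
proof -
  have "sum m UNIV = m j + (m k + sum m (UNIV - {j} - {k}))"
  proof -
    have "sum m UNIV = m j + sum m (UNIV - {j})" by (rule sum.remove) auto
    also have "sum m (UNIV - {j}) = m k + sum m (UNIV - {j} - {k})"
      using jk by (intro sum.remove) auto
    finally show ?thesis .
  qed
  moreover have "sum m (UNIV - {j} - {k}) = 0" by (intro sum.neutral) (auto simp: m_def)
  ultimately show "m \<in> Cs e" using jk e2 by (simp add: Cs_def m_def)
  show "m \<notin> L0 e"
  proof
    assume "m \<in> L0 e"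
    then obtain q where q: "m = (\<lambda>x. if x = q then e else 0)" unfolding L0_def by blast
    have "m j \<noteq> 0" "m k \<noteq> 0" using e2 jk by (auto simp: m_def)
    then have "j = q" "k = q" using q by (auto split: if_splits)
    then show False using jk by simp
  qed
qed


lemma bern1:
  fixes P :: real assumes P: "P \<ge> 2"
  shows "1 + (P - 1) * real n \<le> P ^ n"
proof (induction n)
  case 0 then show ?case by simp
next
  case (Suc n)
  have "P * (1 + (P - 1) * real n) = 1 + (P - 1) * real (Suc n) + (P - 1)^2 * real n"
    by (simp add: power2_eq_square algebra_simps)
  moreover have "(P - 1)^2 * real n \<ge> 0" by simp
  moreover have "P * (1 + (P - 1) * real n) \<le> P * P ^ n" using Suc P by simp
  ultimately have "1 + (P - 1) * real (Suc n) \<le> P * P ^ n" by linarith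
  then show ?case by simp
qed

lemma bern2:
  fixes P :: real assumes P: "P \<ge> 2" and n: "n \<ge> 2"
  shows "1 + (P - 1) * real n < P ^ n"
  using n
proof (induction n rule: nat_induct_at_least)
  case base
  have "(P - 1)^2 > 0" using P by simp
  then show ?case by (simp add: power2_eq_square algebra_simps)
next
  case (Suc n)
  have "P * (1 + (P - 1) * real n) = 1 + (P - 1) * real (Suc n) + (P - 1)^2 * real n"
    by (simp add: power2_eq_square algebra_simps)
  moreover have "(P - 1)^2 * real n \<ge> 0" by simp
  moreover have "P * (1 + (P - 1) * real n) < P * P ^ n" using Suc P by simp
  ultimately have "1 + (P - 1) * real (Suc n) < P * P ^ n" by linarith
  then show ?case by simp
qed

lemma tang:
  assumes p2: "p \<ge> 2"
  shows "1 + (real p - 1) * (real x - real b) \<le> real p ^ x / real p ^ b"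
    and "1 + (real p - 1) * (real x - real b) = real p ^ x / real p ^ b \<longleftrightarrow> (x = b \<or> x = b + 1)"
proof -
  have P: "real p \<ge> 2" using p2 by simp
  have ppos: "real p ^ b > 0" using P by simp
  have "(1 + (real p - 1) * (real x - real b) \<le> real p ^ x / real p ^ b) \<and>
        (1 + (real p - 1) * (real x - real b) = real p ^ x / real p ^ b \<longleftrightarrow> (x = b \<or> x = b + 1))"
  proof (cases "b \<le> x")
    case True
    then obtain n where x: "x = b + n" using le_Suc_ex by blast
    have q: "real p ^ x / real p ^ b = real p ^ n" using ppos by (simp add: x power_add)
    have d: "real x - real b = real n" by (simp add: x)
    show ?thesis
    proof (cases "n \<ge> 2")
      case True
      then show ?thesis using bern2[OF P True] x unfolding q d by auto
    next
      case False
      then have "n = 0 \<or> n = 1" by auto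
      then show ?thesis using x unfolding q d by auto
    qed
  next
    case False
    then have "real x - real b \<le> -1" by simp
    moreover have "real p - 1 \<ge> 1" using P by simp
    ultimately have "(real p - 1) * (real x - real b) \<le> (real p - 1) * (-1)"
      by (intro mult_left_mono) auto
    then have "(real p - 1) * (real x - real b) \<le> -(real p - 1)" by simp
    then have "(real p - 1) * (real x - real b) \<le> -1" using \<open>real p - 1 \<ge> 1\<close> by linarith
    moreover have "real p ^ x / real p ^ b > 0" using P by simp
    ultimately show ?thesis using False by auto
  qed
  then show "1 + (real p - 1) * (real x - real b) \<le> real p ^ x / real p ^ b"
    and "1 + (real p - 1) * (real x - real b) = real p ^ x / real p ^ b \<longleftrightarrow> (x = b \<or> x = b + 1)"
    by auto
qed



lemma Cs_ne: "Cs e \<noteq> ({} :: ('n::finite \<Rightarrow> nat) set)"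
  using delta_Cs[of e "undefined::'n"] by blast

lemma mx_ne: "Mx p e (a::real^'n::finite) \<noteq> {}"
proof -
  let ?S = "fval p a ` Cs e"
  have fin: "finite ?S" by (intro finite_imageI finite_Cs)
  have ne: "?S \<noteq> {}" using Cs_ne by simp
  have "Max ?S \<in> ?S" using fin ne by (rule Max_in)
  then obtain g where g: "g \<in> Cs e" "fval p a g = Max ?S" by auto
  have "\<forall>h\<in>Cs e. fval p a h \<le> fval p a g" using g(2) fin by auto
  then show ?thesis using g(1) by (auto simp: Mx_def)
qed

lemma fval_one_delta:
  "fval p (\<chi> _. 1 :: real^'n::finite) (delta e k) = real p ^ e + (real CARD('n) - 1)"
proof -
  have "fval p (\<chi> _. 1 :: real^'n) (delta e k) = (\<Sum>j\<in>UNIV. if j = k then real p ^ e else 1)"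
    unfolding fval_def delta_def by (intro sum.cong) auto
  also have "\<dots> = real p ^ e + (\<Sum>j\<in>UNIV - {k}. if j = k then real p ^ e else 1)"
    using sum.remove[of UNIV k "\<lambda>j. if j = k then real p ^ e else 1"] by simp
  also have "(\<Sum>j\<in>UNIV - {k}. if j = k then real p ^ e else 1) = (\<Sum>j\<in>UNIV - {k}. (1::real))"
    by (intro sum.cong) auto
  also have "\<dots> = real CARD('n) - 1" by (simp add: card_Diff_singleton)
  finally show ?thesis .
qed

lemma realize_L0:
  assumes p2: "p \<ge> 2" and e2: "e \<ge> 2"
  shows "Mx p e (\<chi> _. 1 :: real^'n::finite) = L0 e"
proof
  show "Mx p e (\<chi> _. 1 :: real^'n) \<subseteq> L0 e"
    using pos_case[OF p2, of e "\<chi> _. 1 :: real^'n" "undefined"] e2 by auto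
  show "L0 e \<subseteq> Mx p e (\<chi> _. 1 :: real^'n)"
  proof
    fix g :: "'n \<Rightarrow> nat" assume "g \<in> L0 e"
    then obtain k where k: "g = delta e k" unfolding L0_def delta_def by blast
    obtain g0 where g0: "g0 \<in> Mx p e (\<chi> _. 1 :: real^'n)" using mx_ne by blast
    then have "g0 \<in> L0 e"
      using pos_case[OF p2, of e "\<chi> _. 1 :: real^'n" "undefined"] e2 by auto
    then obtain q where q: "g0 = delta e q" unfolding L0_def delta_def by blast
    have "fval p (\<chi> _. 1 :: real^'n) g = fval p (\<chi> _. 1 :: real^'n) g0"
      unfolding k q fval_one_delta ..
    then show "g \<in> Mx p e (\<chi> _. 1 :: real^'n)" using g0 k delta_Cs[of e k]
      by (auto simp: Mx_def)
  qed
qed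

definition aLi :: "'n::finite \<Rightarrow> real^'n" where "aLi i = (\<chi> j. if j = i then -1 else 0)"

lemma fval_Li: "fval p (aLi i :: real^'n::finite) g = - (real p ^ g i)"
proof -
  have "fval p (aLi i :: real^'n) g = (\<Sum>j\<in>UNIV. if j = i then - (real p ^ g j) else 0)"
    unfolding fval_def aLi_def by (intro sum.cong) auto
  also have "\<dots> = - (real p ^ g i)" by simp
  finally show ?thesis .
qed

lemma realize_Li:
  assumes p2: "p \<ge> 2" and d3: "CARD('n::finite) \<ge> 3"
  shows "Mx p e (aLi i :: real^'n) = Li e i"
proof
  have P: "real p \<ge> 2" using p2 by simp
  show "Mx p e (aLi i :: real^'n) \<subseteq> Li e i"
  proof
    fix g assume g: "g \<in> Mx p e (aLi i :: real^'n)"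
    obtain j k where jk: "j \<noteq> i" "k \<noteq> i" "j \<noteq> k" using two_others[OF d3, of i] by blast
    have "fval p (aLi i :: real^'n) (delta e j)
          \<le> fval p (aLi i :: real^'n) g"
      using Mx_max[OF g delta_Cs] .
    then have "real p ^ g i \<le> 1" using jk by (simp add: fval_Li delta_def)
    then have "g i = 0" using P by (metis one_less_power not_le neq0_conv order_less_le_trans one_less_numeral_iff semiring_norm(76))
    then show "g \<in> Li e i" using g by (simp add: Mx_def Cs_def Li_def)
  qed
  show "Li e i \<subseteq> Mx p e (aLi i :: real^'n)"
  proof
    fix g :: "'n \<Rightarrow> nat" assume g: "g \<in> Li e i"
    have "fval p (aLi i :: real^'n) h \<le> fval p (aLi i :: real^'n) g"
      for h
    proof -
      have "1 \<le> real p ^ h i" using P by (simp add: one_le_power)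
      then show ?thesis using g by (simp add: fval_Li Li_def)
    qed
    then show "g \<in> Mx p e (aLi i :: real^'n)" using g
      by (simp add: Mx_def Cs_def Li_def)
  qed
qed


definition aLb :: "nat \<Rightarrow> ('n::finite \<Rightarrow> nat) \<Rightarrow> real^'n" where
  "aLb p b = (\<chi> j. -1 / real p ^ b j)"

lemma fval_Lb: "fval p (aLb p b) g = - (\<Sum>j\<in>UNIV. real p ^ g j / real p ^ b j)"
proof -
  have "fval p (aLb p b) g = (\<Sum>j\<in>UNIV. - (real p ^ g j / real p ^ b j))"
    unfolding fval_def aLb_def by (intro sum.cong) auto
  then show ?thesis by (simp add: sum_negf)
qed

lemma lin_sum:
  fixes g b :: "'n::finite \<Rightarrow> nat"
  assumes "g \<in> Cs e" "sum b UNIV = e - l" "l \<le> e"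
  shows "(\<Sum>j\<in>UNIV. 1 + (real p - 1) * (real (g j) - real (b j))) = real CARD('n) + (real p - 1) * real l"
proof -
  have "(\<Sum>j\<in>UNIV. 1 + (real p - 1) * (real (g j) - real (b j)))
      = real CARD('n) + (real p - 1) * ((\<Sum>j\<in>UNIV. real (g j)) - (\<Sum>j\<in>UNIV. real (b j)))"
    by (simp add: sum.distrib sum_distrib_left[symmetric] sum_subtractf)
  also have "(\<Sum>j\<in>UNIV. real (g j)) = real e" using assms(1)
    by (simp add: Cs_def flip: of_nat_sum)
  also have "(\<Sum>j\<in>UNIV. real (b j)) = real (e - l)" using assms(2)
    by (simp flip: of_nat_sum)
  also have "real e - real (e - l) = real l" using assms(3) by simp
  finally show ?thesis .
qed

lemma realize_Lb:
  fixes b :: "'n::finite \<Rightarrow> nat"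
  assumes p2: "p \<ge> 2" and l1: "1 \<le> l" and le: "l \<le> e" and ld: "l \<le> CARD('n) - 1"
    and sb: "sum b UNIV = e - l"
  shows "Mx p e (aLb p b) = Lb l b"
proof -
  define T where "T g = (\<Sum>j\<in>UNIV. real p ^ g j / real p ^ b j)" for g :: "'n \<Rightarrow> nat"
  define B where "B = real CARD('n) + (real p - 1) * real l"
  have fv: "fval p (aLb p b) g = - T g" for g by (simp add: fval_Lb T_def)
  have TgeB: "B \<le> T g" if "g \<in> Cs e" for g
  proof -
    have "B = (\<Sum>j\<in>UNIV. 1 + (real p - 1) * (real (g j) - real (b j)))"
      using lin_sum[OF that sb le] by (simp add: B_def)
    also have "\<dots> \<le> T g" unfolding T_def by (intro sum_mono tang(1)[OF p2])
    finally show ?thesis .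
  qed
  have Teq: "g \<in> Lb l b" if g: "g \<in> Cs e" and TB: "T g \<le> B" for g
  proof -
    have each: "g j = b j \<or> g j = b j + 1" for j
    proof (rule ccontr)
      assume "\<not> (g j = b j \<or> g j = b j + 1)"
      then have "1 + (real p - 1) * (real (g j) - real (b j)) < real p ^ g j / real p ^ b j"
        using tang[OF p2, of "g j" "b j"] by auto
      then have "(\<Sum>j\<in>UNIV. 1 + (real p - 1) * (real (g j) - real (b j))) < T g"
        unfolding T_def by (intro sum_strict_mono_ex1) (auto intro: tang(1)[OF p2])
      then show False using lin_sum[OF g sb le] TB by (simp add: B_def)
    qed
    define eps where "eps j = g j - b j" for j
    have e01: "\<forall>j. eps j \<in> {0,1}"
    proof
      fix j show "eps j \<in> {0,1}" using each[of j] by (auto simp: eps_def)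
    qed
    have geq: "g = (\<lambda>j. b j + eps j)"
    proof
      fix j show "g j = b j + eps j" using each[of j] by (auto simp: eps_def)
    qed
    have "sum eps UNIV = sum g UNIV - sum b UNIV"
      unfolding eps_def
    proof (intro sum_subtractf_nat)
      fix j show "b j \<le> g j" using each[of j] by auto
    qed
    then have "sum eps UNIV = l" using g sb le by (simp add: Cs_def)
    then show ?thesis unfolding Lb_def using e01 geq by blast
  qed
  have Tlb: "T g = B" if g: "g \<in> Lb l b" for g
  proof -
    have gC: "g \<in> Cs e" using Lb_Cs[OF sb le] g by blast
    obtain eps where eps: "\<forall>j. eps j \<in> {0,1}" "g = (\<lambda>j. b j + eps j)" using g unfolding Lb_def by blast
    have "T g = (\<Sum>j\<in>UNIV. 1 + (real p - 1) * (real (g j) - real (b j)))"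
      unfolding T_def
    proof (intro sum.cong refl)
      fix j
      have "g j = b j \<or> g j = b j + 1" using eps by auto
      then show "real p ^ g j / real p ^ b j = 1 + (real p - 1) * (real (g j) - real (b j))"
        using tang(2)[OF p2, of "g j" "b j"] by simp
    qed
    then show ?thesis using lin_sum[OF gC sb le] by (simp add: B_def)
  qed
  obtain e1 :: "'n \<Rightarrow> nat" where e1: "\<forall>j. e1 j \<in> {0,1}" "sum e1 UNIV = l" "e1 undefined = 1"
    using lb_eps1[OF l1 ld, of undefined] by (elim exE conjE)
  have g1: "(\<lambda>j. b j + e1 j) \<in> Lb l b" unfolding Lb_def using e1 by (intro CollectI exI[of _ e1]) simp
  show ?thesis
  proof
    show "Mx p e (aLb p b) \<subseteq> Lb l b"
    proof
      fix g assume g: "g \<in> Mx p e (aLb p b)"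
      have g1C: "(\<lambda>j. b j + e1 j) \<in> Cs e" using Lb_Cs[OF sb le] g1 by blast
      have "fval p (aLb p b) (\<lambda>j. b j + e1 j) \<le> fval p (aLb p b) g" using Mx_max[OF g g1C] .
      then have "T g \<le> B" using Tlb[OF g1] by (simp add: fv)
      then show "g \<in> Lb l b" using Teq g by (simp add: Mx_def)
    qed
    show "Lb l b \<subseteq> Mx p e (aLb p b)"
    proof
      fix g assume g: "g \<in> Lb l b"
      have gC: "g \<in> Cs e" using Lb_Cs[OF sb le] g by blast
      have "fval p (aLb p b) h \<le> fval p (aLb p b) g" if "h \<in> Cs e" for h
        using TgeB[OF that] Tlb[OF g] by (simp add: fv)
      then show "g \<in> Mx p e (aLb p b)" using gC by (simp add: Mx_def)
    qed
  qed
qed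


lemma realize:
  assumes p2: "p \<ge> 2" and e2: "e \<ge> 2" and d3: "CARD('n::finite) \<ge> 3"
    and L: "listed e (L :: ('n \<Rightarrow> nat) set)"
  shows "\<exists>a. Mx p e a = L"
proof -
  consider "L = L0 e" | i where "L = Li e i"
    | l b where "l \<in> {1..min e (CARD('n) - 1)}" "sum b UNIV = e - l" "L = Lb l b"
    using L unfolding listed_def by blast
  then show ?thesis
  proof cases
    case 1 then show ?thesis using realize_L0[OF p2 e2] by blast
  next
    case (2 i) then show ?thesis using realize_Li[OF p2 d3] by blast
  next
    case (3 l b)
    then have "Mx p e (aLb p b) = Lb l b" by (intro realize_Lb[OF p2]) auto
    then show ?thesis using 3 by blast
  qed
qed

lemma Li_delta: "j \<noteq> i \<Longrightarrow> delta e j \<in> Li e i"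
  using delta_Cs[of e j] by (simp add: Li_def Cs_def delta_def)

lemma delta_notin_Li: "e \<ge> 1 \<Longrightarrow> delta e i \<notin> Li e i"
  by (simp add: Li_def delta_def)

lemma lb_elem1:
  assumes "1 \<le> l" "l \<le> CARD('n::finite) - 1"
  shows "\<exists>g\<in>Lb l b. g (i::'n) = b i + 1"
proof -
  obtain e1 :: "'n \<Rightarrow> nat" where e1: "\<forall>j. e1 j \<in> {0,1}" "sum e1 UNIV = l" "e1 i = 1"
    using lb_eps1[OF assms, of i] by (elim exE conjE)
  have mem: "(\<lambda>j. b j + e1 j) \<in> Lb l b" unfolding Lb_def using e1 by (intro CollectI exI[of _ e1]) simp
  show ?thesis by (rule bexI[OF _ mem]) (simp add: e1(3))
qed

lemma lb_elem0:
  assumes "1 \<le> l" "l \<le> CARD('n::finite) - 1"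
  shows "\<exists>g\<in>Lb l b. g (i::'n) = b i"
proof -
  obtain e1 :: "'n \<Rightarrow> nat" where e1: "\<forall>j. e1 j \<in> {0,1}" "sum e1 UNIV = l" "e1 i = 0"
    using lb_eps0[OF assms, of i] by (elim exE conjE)
  have mem: "(\<lambda>j. b j + e1 j) \<in> Lb l b" unfolding Lb_def using e1 by (intro CollectI exI[of _ e1]) simp
  show ?thesis by (rule bexI[OF _ mem]) (simp add: e1(3))
qed

lemma Lb_form:
  assumes "g \<in> Lb l b" shows "g i = b i \<or> g i = b i + 1"
proof -
  obtain e1 where e1: "\<forall>j. e1 j \<in> {0,1}" "g = (\<lambda>j. b j + e1 j)" using assms unfolding Lb_def by blast
  have "e1 i \<in> {0,1}" using e1(1) by blast
  then show ?thesis using e1(2) by auto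
qed

lemma listed_cases:
  assumes "listed e (L :: ('n::finite \<Rightarrow> nat) set)"
  obtains "L = L0 e" | i where "L = Li e i"
    | l b where "1 \<le> l" "l \<le> e" "l \<le> CARD('n) - 1" "sum b UNIV = e - l" "L = Lb l b"
  using assms unfolding listed_def by force

lemma listed_nonempty:
  assumes e2: "e \<ge> 2" and d3: "CARD('n::finite) \<ge> 3" and L: "listed e (L :: ('n \<Rightarrow> nat) set)"
  shows "L \<noteq> {}"
  using L
proof (cases rule: listed_cases)
  case 1 then show ?thesis using delta_L0 by blast
next
  case (2 i)
  obtain j k :: 'n where "j \<noteq> i" "k \<noteq> i" "j \<noteq> k" using two_others[OF d3] by blast
  then show ?thesis using 2 Li_delta by blast
next
  case (3 l b)
  then show ?thesis using lb_elem1[OF 3(1,3), of b undefined] by blast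
qed

lemma listed_proper:
  assumes e2: "e \<ge> 2" and d3: "CARD('n::finite) \<ge> 3" and L: "listed e (L :: ('n \<Rightarrow> nat) set)"
  shows "\<exists>g\<in>Cs e. g \<notin> L"
  using L
proof (cases rule: listed_cases)
  case 1
  obtain j k :: 'n where "j \<noteq> undefined" "k \<noteq> undefined" "j \<noteq> k" using two_others[OF d3] by blast
  then show ?thesis using 1 mixed[OF e2, of j k] by blast
next
  case (2 i)
  then show ?thesis using delta_Cs[of e i] delta_notin_Li[of e i] e2 by auto
next
  case (3 l b)
  obtain j k :: 'n where jk: "j \<noteq> undefined" "k \<noteq> undefined" "j \<noteq> k" using two_others[OF d3] by blast
  show ?thesis
  proof (rule ccontr)
    assume "\<not> ?thesis"
    then have "delta e j \<in> L" "delta e k \<in> L" using delta_Cs by blast+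
    then show False using delta_pw[OF e2 jk(3), of L] Lb_pw 3(5) by blast
  qed
qed

lemma nonnest:
  assumes e2: "e \<ge> 2" and d3: "CARD('n::finite) \<ge> 3"
    and L: "listed e (L :: ('n \<Rightarrow> nat) set)" and L': "listed e L'" and sub: "L \<subseteq> L'"
  shows "L = L'"
  using L
proof (cases rule: listed_cases)
  case 1
  show ?thesis using L'
  proof (cases rule: listed_cases)
    case 1 then show ?thesis using \<open>L = L0 e\<close> by simp
  next
    case (2 i)
    then show ?thesis using sub \<open>L = L0 e\<close> delta_L0[of e i] delta_notin_Li[of e i] e2 by auto
  next
    case (3 l b)
    obtain j k :: 'n where jk: "j \<noteq> undefined" "k \<noteq> undefined" "j \<noteq> k" using two_others[OF d3] by blast
    have "delta e j \<in> L'" "delta e k \<in> L'" using sub \<open>L = L0 e\<close> delta_L0 by blast+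
    then show ?thesis using delta_pw[OF e2 jk(3), of L'] Lb_pw 3(5) by blast
  qed
next
  case (2 i)
  obtain j k :: 'n where jk: "j \<noteq> i" "k \<noteq> i" "j \<noteq> k" using two_others[OF d3] by blast
  show ?thesis using L'
  proof (cases rule: listed_cases)
    case 1
    define m where "m = (\<lambda>x. if x = j then e - 1 else if x = k then 1 else (0::nat))"
    have "m \<in> Cs e" "m \<notin> L0 e" using mixed[OF e2 jk(3)] by (simp_all add: m_def)
    moreover have "m i = 0" using jk by (simp add: m_def)
    ultimately have "m \<in> L" using 2 by (simp add: Li_def Cs_def)
    then show ?thesis using sub 1 \<open>m \<notin> L0 e\<close> by blast
  next
    case (2 i')
    show ?thesis
    proof (cases "i' = i")
      case True then show ?thesis using 2 \<open>L = Li e i\<close> by simp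
    next
      case False
      have "delta e i' \<in> L" using Li_delta[OF False] \<open>L = Li e i\<close> by simp
      then show ?thesis using sub 2 delta_notin_Li[of e i'] e2 by auto
    qed
  next
    case (3 l b)
    have "delta e j \<in> L'" "delta e k \<in> L'" using sub 2 Li_delta jk by blast+
    then show ?thesis using delta_pw[OF e2 jk(3), of L'] Lb_pw 3(5) by blast
  qed
next
  case (3 l b)
  note LB = 3
  show ?thesis using L'
  proof (cases rule: listed_cases)
    case 1
    obtain g1 where g1: "g1 \<in> L" "g1 undefined = b undefined + 1"
      using lb_elem1[OF LB(1,3), of b undefined] LB(5) by blast
    obtain g0 where g0: "g0 \<in> L" "g0 undefined = b undefined"
      using lb_elem0[OF LB(1,3), of b undefined] LB(5) by blast
    obtain m where m: "g1 = delta e m" using g1(1) sub 1 unfolding L0_def delta_def by blast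
    obtain m' where m': "g0 = delta e m'" using g0(1) sub 1 unfolding L0_def delta_def by blast
    have "m \<noteq> m'" using g1(2) g0(2) m m' by auto
    then show ?thesis using delta_pw[OF e2, of m m' L] g1(1) g0(1) m m' Lb_pw LB(5) by blast
  next
    case (2 i)
    obtain g1 where g1: "g1 \<in> L" "g1 i = b i + 1"
      using lb_elem1[OF LB(1,3), of b i] LB(5) by blast
    then show ?thesis using sub 2 by (auto simp: Li_def)
  next
    case (3 l' b')
    have bb: "b i = b' i" for i
    proof -
      obtain g1 where g1: "g1 \<in> L" "g1 i = b i + 1"
        using lb_elem1[OF LB(1,3), of b i] LB(5) by blast
      obtain g0 where g0: "g0 \<in> L" "g0 i = b i"
        using lb_elem0[OF LB(1,3), of b i] LB(5) by blast
      have "g1 i = b' i \<or> g1 i = b' i + 1" using Lb_form[of g1 l' b'] g1(1) sub 3(5) by blast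
      moreover have "g0 i = b' i \<or> g0 i = b' i + 1" using Lb_form[of g0 l' b'] g0(1) sub 3(5) by blast
      ultimately show ?thesis using g1(2) g0(2) by auto
    qed
    then have "b = b'" by auto
    then have "l = l'" using LB(2,4) 3(2,4) by simp
    then show ?thesis using \<open>b = b'\<close> LB(5) 3(5) by simp
  qed
qed

lemma mx_face:
  fixes a :: "real^'n::finite"
  assumes g0: "g0 \<in> Mx p e a"
  shows "convex hull (E p ` Mx p e a) = convex hull (E p ` Cs e) \<inter> {x. a \<bullet> x = fval p a g0}"
    and "convex hull (E p ` Mx p e a) face_of convex hull (E p ` Cs e)"
proof -
  let ?V = "E p ` Cs e" let ?P = "convex hull ?V" let ?b = "fval p a g0"
  have le: "?V \<subseteq> {x. a \<bullet> x \<le> ?b}" using g0 by (auto simp: Mx_def inner_E)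
  have Ple: "?P \<subseteq> {x. a \<bullet> x \<le> ?b}"
    by (rule hull_minimal[OF le]) (simp add: convex_halfspace_le)
  have face: "(?P \<inter> {x. a \<bullet> x = ?b}) face_of ?P"
    by (rule face_of_Int_supporting_hyperplane_le) (use Ple in auto)
  have cpt: "compact ?V" using finite_Cs by (intro finite_imp_compact) auto
  obtain S' where S': "S' \<subseteq> ?V" "?P \<inter> {x. a \<bullet> x = ?b} = convex hull S'"
    using face_of_convex_hull_subset[OF cpt face] by blast
  have "S' \<subseteq> E p ` Mx p e a"
  proof
    fix x assume x: "x \<in> S'"
    obtain g where g: "g \<in> Cs e" "x = E p g" using S'(1) x by blast
    have "x \<in> convex hull S'" using x by (rule hull_inc)
    then have "x \<in> ?P \<inter> {x. a \<bullet> x = ?b}" by (simp only: S'(2))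
    then have "x \<in> {x. a \<bullet> x = ?b}" by blast
    then have "fval p a g = ?b" using g by (simp add: inner_E)
    then have "g \<in> Mx p e a" using g g0 by (auto simp: Mx_def)
    then show "x \<in> E p ` Mx p e a" using g by auto
  qed
  then have 1: "?P \<inter> {x. a \<bullet> x = ?b} \<subseteq> convex hull (E p ` Mx p e a)"
    unfolding S'(2) using hull_mono by metis
  have "E p ` Mx p e a \<subseteq> ?P \<inter> {x. a \<bullet> x = ?b}"
  proof
    fix x assume "x \<in> E p ` Mx p e a"
    then obtain g where g: "g \<in> Mx p e a" "x = E p g" by auto
    then have "fval p a g = ?b" using g0 by (force simp: Mx_def)
    moreover have "x \<in> ?P" using g by (intro hull_inc) (auto simp: Mx_def)
    ultimately show "x \<in> ?P \<inter> {x. a \<bullet> x = ?b}" using g by (simp add: inner_E)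
  qed
  then have 2: "convex hull (E p ` Mx p e a) \<subseteq> ?P \<inter> {x. a \<bullet> x = ?b}"
    by (rule hull_minimal) (simp add: convex_Int convex_hyperplane)
  show eq: "convex hull (E p ` Mx p e a) = ?P \<inter> {x. a \<bullet> x = ?b}" using 1 2 by blast
  show "convex hull (E p ` Mx p e a) face_of ?P" using face eq by simp
qed

lemma mx_back:
  fixes a :: "real^'n::finite"
  assumes "Mx p e a \<noteq> {}" "g \<in> Cs e" "E p g \<in> convex hull (E p ` Mx p e a)"
  shows "g \<in> Mx p e a"
proof -
  obtain g0 where g0: "g0 \<in> Mx p e a" using assms by auto
  have "fval p a g = fval p a g0" using assms(3) mx_face(1)[OF g0] by (simp add: inner_E)
  then show ?thesis using g0 assms(2) by (auto simp: Mx_def)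
qed

lemma mx_proper:
  fixes a :: "real^'n::finite"
  assumes "Mx p e a \<noteq> {}" "g \<in> Cs e" "g \<notin> Mx p e a"
  shows "convex hull (E p ` Mx p e a) \<noteq> convex hull (E p ` Cs e)"
proof
  assume eq: "convex hull (E p ` Mx p e a) = convex hull (E p ` Cs e)"
  have "E p g \<in> convex hull (E p ` Cs e)" using assms(2) by (intro hull_inc) auto
  then show False using mx_back[OF assms(1,2)] assms(3) eq by simp
qed


lemma facet_listed:
  fixes p e :: nat
  assumes p2: "p \<ge> 2" and e2: "e \<ge> 2" and d3: "CARD('n::finite) \<ge> 3"
    and F: "F facet_of (convex hull (E p ` Cs e) :: (real^'n) set)"
  shows "\<exists>L. listed e L \<and> F = convex hull (E p ` L)"
proof -
  let ?V = "E p ` Cs e :: (real^'n) set"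
  let ?P = "convex hull ?V"
  have poly: "polyhedron ?P"
    by (rule polytope_imp_polyhedron) (use finite_Cs in \<open>auto simp: polytope_def intro!: exI[of _ "E p ` Cs e"]\<close>)
  have cvx: "convex ?P" by simp
  obtain a b where ab: "a \<noteq> 0" "?P \<subseteq> {x. a \<bullet> x \<le> b}" "F = ?P \<inter> {x. a \<bullet> x = b}"
    using facet_of_polyhedron[OF poly F] by blast
  have Fne: "F \<noteq> {}" and Fface: "F face_of ?P" and Fdim: "aff_dim F = aff_dim ?P - 1"
    using F by (auto simp: facet_of_def)
  have cpt: "compact ?V" using finite_Cs by (intro finite_imp_compact) auto
  obtain S' where S': "S' \<subseteq> ?V" "F = convex hull S'"
    using face_of_convex_hull_subset[OF cpt Fface] by blast
  have "S' \<noteq> {}" using S' Fne by auto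
  then obtain x where x: "x \<in> S'" by blast
  then obtain g0 where g0: "g0 \<in> Cs e" "x = E p g0" using S'(1) by blast
  have "x \<in> F" using x S'(2) hull_inc by metis
  then have xb: "a \<bullet> x = b" using ab(3) by blast
  have g0M: "g0 \<in> Mx p e a"
  proof -
    have "fval p a h \<le> fval p a g0" if "h \<in> Cs e" for h
    proof -
      have "E p h \<in> ?P" using that by (intro hull_inc) auto
      then have "a \<bullet> E p h \<le> b" using ab(2) by blast
      then show ?thesis using xb g0 by (simp add: inner_E)
    qed
    then show ?thesis using g0 by (auto simp: Mx_def)
  qed
  have Feq: "F = convex hull (E p ` Mx p e a)"
    using mx_face(1)[OF g0M] ab(3) xb g0 by (simp add: inner_E)
  obtain L where L: "listed e L" "Mx p e a \<subseteq> L"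
    using classify2[OF p2 e2 d3 ab(1)] g0M by blast
  obtain a' where a': "Mx p e a' = L" using realize[OF p2 e2 d3 L(1)] by blast
  have Lne: "L \<noteq> {}" using listed_nonempty[OF e2 d3 L(1)] .
  then obtain g1 where g1: "g1 \<in> Mx p e a'" using a' by blast
  let ?G = "convex hull (E p ` L)"
  have Gface: "?G face_of ?P" using mx_face(2)[OF g1] a' by simp
  obtain g2 where g2: "g2 \<in> Cs e" "g2 \<notin> L" using listed_proper[OF e2 d3 L(1)] by blast
  have GneP: "?G \<noteq> ?P" using mx_proper[of p e a' g2] g2 a' Lne by simp
  have FG: "F \<subseteq> ?G" unfolding Feq by (rule hull_mono) (use L(2) in blast)
  have "F = ?G"
  proof (rule ccontr)
    assume ne: "F \<noteq> ?G"
    have GP: "?G \<subseteq> ?P" using Gface face_of_imp_subset by blast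
    have "F face_of ?G" using face_of_subset[OF Fface FG GP] .
    then have "aff_dim F < aff_dim ?G"
      using face_of_aff_dim_lt[of ?G F] ne face_of_imp_convex[OF Gface] by blast
    moreover have "aff_dim ?G < aff_dim ?P"
      using face_of_aff_dim_lt[OF cvx Gface GneP] .
    ultimately show False using Fdim by linarith
  qed
  then show ?thesis using L(1) by blast
qed

theorem main_char:
  fixes p e :: nat
  assumes p2: "p \<ge> 2" and e2: "e \<ge> 2" and d3: "CARD('n::finite) \<ge> 3"
  shows "{F. F facet_of (convex hull (E p ` Cs e) :: (real^'n) set)} =
         {convex hull (E p ` L) | L. listed e (L :: ('n \<Rightarrow> nat) set)}"
proof (intro subset_antisym subsetI)
  let ?V = "E p ` Cs e :: (real^'n) set"
  let ?P = "convex hull ?V"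
  fix F assume "F \<in> {F. F facet_of ?P}"
  then show "F \<in> {convex hull (E p ` L) | L. listed e (L :: ('n \<Rightarrow> nat) set)}"
    using facet_listed[OF p2 e2 d3] by blast
next
  let ?V = "E p ` Cs e :: (real^'n) set"
  let ?P = "convex hull ?V"
  have poly: "polyhedron ?P"
    by (rule polytope_imp_polyhedron) (use finite_Cs in \<open>auto simp: polytope_def intro!: exI[of _ "E p ` Cs e"]\<close>)
  fix G assume "G \<in> {convex hull (E p ` L) | L. listed e (L :: ('n \<Rightarrow> nat) set)}"
  then obtain L where L: "listed e L" "G = convex hull (E p ` L)" by blast
  obtain a' where a': "Mx p e a' = L" using realize[OF p2 e2 d3 L(1)] by blast
  have Lne: "L \<noteq> {}" using listed_nonempty[OF e2 d3 L(1)] .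
  then obtain g1 where g1: "g1 \<in> Mx p e a'" using a' by blast
  have Gface: "G face_of ?P" using mx_face(2)[OF g1] a' L(2) by simp
  obtain g2 where g2: "g2 \<in> Cs e" "g2 \<notin> L" using listed_proper[OF e2 d3 L(1)] by blast
  have GneP: "G \<noteq> ?P" using mx_proper[of p e a' g2] g2 a' Lne L(2) by simp
  have Gne: "G \<noteq> {}" using Lne L(2) by simp
  obtain F where F: "F facet_of ?P" "G \<subseteq> F"
    using face_of_polyhedron_subset_facet[OF poly Gface Gne GneP] by blast
  obtain L' where L': "listed e L'" "F = convex hull (E p ` L')"
    using facet_listed[OF p2 e2 d3 F(1)] by blast
  obtain a'' where a'': "Mx p e a'' = L'" using realize[OF p2 e2 d3 L'(1)] by blast
  have L'ne: "L' \<noteq> {}" using listed_nonempty[OF e2 d3 L'(1)] .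
  have "L \<subseteq> L'"
  proof
    fix g assume g: "g \<in> L"
    have gC: "g \<in> Cs e" using g a' by (auto simp: Mx_def)
    have "E p g \<in> G" using g L(2) by (simp add: hull_inc)
    then have "E p g \<in> convex hull (E p ` Mx p e a'')" using F(2) L'(2) a'' by auto
    then show "g \<in> L'" using mx_back[of p e a'' g] gC L'ne a'' by simp
  qed
  then have "L = L'" using nonnest[OF e2 d3 L(1) L'(1)] by blast
  then show "G \<in> {F. F facet_of ?P}" using F(1) L(2) L'(2) by simp
qed


lemma set1: "{(\<chi> j. if j = i then real (p ^ e) else 1) | i. True} = (E p ` L0 e :: (real^'n::finite) set)"
proof -
  have h: "E p (\<lambda>j. if j = i then e else 0) = (\<chi> j. if j = i then real (p ^ e) else 1)" for i :: 'n
    by (simp add: E_def vec_eq_iff)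
  have "L0 e = range (\<lambda>(i::'n) j. if j = i then e else 0)" by (auto simp: L0_def)
  then have "E p ` L0 e = range (\<lambda>i::'n. (\<chi> j. if j = i then real (p ^ e) else 1))"
    by (simp add: image_image h)
  then show ?thesis by auto
qed

lemma set2: "{(\<chi> j. real p ^ \<beta> j) | \<beta> :: 'n::finite \<Rightarrow> nat. \<beta> i = 0 \<and> (\<Sum>j\<in>UNIV. \<beta> j) = e}
   = E p ` Li e i"
  by (auto simp: Li_def E_def)

lemma set3: "{(\<chi> j. real p ^ (\<beta> j + \<epsilon> j)) | \<epsilon> :: 'n::finite \<Rightarrow> nat.
            (\<forall>j. \<epsilon> j \<in> {0, 1}) \<and> (\<Sum>j\<in>UNIV. \<epsilon> j) = l} = E p ` Lb l \<beta>"
proof -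
  let ?S = "{\<epsilon> :: 'n \<Rightarrow> nat. (\<forall>j. \<epsilon> j \<in> {0, 1}) \<and> (\<Sum>j\<in>UNIV. \<epsilon> j) = l}"
  have "Lb l \<beta> = (\<lambda>\<epsilon> j. \<beta> j + \<epsilon> j) ` ?S" by (auto simp: Lb_def)
  then have "E p ` Lb l \<beta> = (\<lambda>\<epsilon>. (\<chi> j. real p ^ (\<beta> j + \<epsilon> j))) ` ?S"
    by (simp add: image_image E_def)
  then show ?thesis by blast
qed

lemma cond3:
  assumes "prime p"
  shows "(\<chi> j. real p ^ \<beta> j) \<in> (vec_factorisations (p ^ k) :: (real^'n::finite) set)
     \<longleftrightarrow> sum \<beta> UNIV = k"
proof -
  have p2: "p \<ge> 2" using assms prime_ge_2_nat by blast
  have "(\<chi> j. real p ^ \<beta> j) = (E p \<beta> :: real^'n)" by (simp add: E_def)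
  then have "(\<chi> j. real p ^ \<beta> j) \<in> (vec_factorisations (p ^ k) :: (real^'n::finite) set)
     \<longleftrightarrow> E p \<beta> \<in> E p ` Cs k" by (simp add: vf_char[OF assms])
  also have "\<dots> \<longleftrightarrow> \<beta> \<in> Cs k" by (auto simp: E_inj[OF p2])
  finally show ?thesis by (simp add: Cs_def)
qed

theorem theorem1p2:
  fixes p e :: nat
  assumes "prime p" and "e \<ge> 2" and "CARD('n::finite) \<ge> 3"
  shows "{F. F facet_of (factorisation_polytope (p ^ e) :: (real^'n) set)} =
     {convex hull {(\<chi> j. if j = i then real (p ^ e) else 1) | i. True}}
     \<union> {convex hull {(\<chi> j. real p ^ \<beta> j) | \<beta> :: 'n \<Rightarrow> nat.
            \<beta> i = 0 \<and> (\<Sum>j\<in>UNIV. \<beta> j) = e} | i :: 'n. True}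
     \<union> {convex hull {(\<chi> j. real p ^ (\<beta> j + \<epsilon> j)) | \<epsilon> :: 'n \<Rightarrow> nat.
            (\<forall>j. \<epsilon> j \<in> {0, 1}) \<and> (\<Sum>j\<in>UNIV. \<epsilon> j) = l}
        | l \<beta>. l \<in> {1 .. min e (CARD('n) - 1)} \<and>
            (\<chi> j. real p ^ \<beta> j) \<in> (vec_factorisations (p ^ (e - l)) :: (real^'n) set)}"
proof -
  have p2: "p \<ge> 2" using assms prime_ge_2_nat by blast
  have P: "(factorisation_polytope (p ^ e) :: (real^'n) set) = convex hull (E p ` Cs e)"
    by (simp add: factorisation_polytope_def vf_char[OF assms(1)])
  have R: "{convex hull (E p ` L) | L. listed e (L :: ('n \<Rightarrow> nat) set)} =
     {convex hull (E p ` L0 e)}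
     \<union> {convex hull (E p ` Li e i) | i :: 'n. True}
     \<union> {convex hull (E p ` Lb l \<beta>) | l \<beta>. l \<in> {1 .. min e (CARD('n) - 1)} \<and> sum \<beta> UNIV = e - l}"
    unfolding listed_def by blast
  show ?thesis
    unfolding P main_char[OF p2 assms(2,3)] R set1 set2 set3 cond3[OF assms(1)] by simp
qed

end
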